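(* Let $K\ge L\ge T\ge 2$, let $x$ be a positive integer coprime to $q$, and let $\mathrm{CAT}_x(K,L,T)$ be as in the context. Then $|\mathcal{TR}\cap\mathcal{BR}|=2\bar T-\kappa$ and $|\mathcal{BL}\cap\mathcal{BR}|=2\bar T-\lambda$.
   Context: Let $\kappa,\lambda$ be the smallest non-negative integers such that $K+1+\kappa$ and $L+1+\lambda$ are coprime to $T-1$; $K^\star=K+1+\kappa$, $L^\star=L+1+\lambda$, $\bar T=T-1$, $q=K^\star L^\star+\bar T^2$. For $x$ coprime to $q$, $y\in\{0,\dots,q-1\}$ is the unique integer with $x\bar T+yK^\star\equiv0\pmod q$. $\mathrm{CAT}_x(K,L,T)$ consists of $q$ and the vectors over $\mathbb{Z}_q$: $\boldsymbol{\alpha}^{(p)}=(ky)_{k=0}^{K-1}$, $\boldsymbol{\alpha}^{(s)}=(Ky+kx)_{k=0}^{T-1}$, $\boldsymbol{\beta}^{(p)}=(kx)_{k=0}^{L-1}$, $\boldsymbol{\beta}^{(s)}=(ky-x)_{k=0}^{T-1}$, all mod $q$. With $\{\mathbf v\}$ the set of entries and sumsets $\mathcal A+\mathcal B=\{a+b\}$ in $\mathbb{Z}_q$: $\mathcal{TR}=\{\boldsymbol{\alpha}^{(p)}\}+\{\boldsymbol{\beta}^{(s)}\}$, $\mathcal{BL}=\{\boldsymbol{\alpha}^{(s)}\}+\{\boldsymbol{\beta}^{(p)}\}$, $\mathcal{BR}=\{\boldsymbol{\alpha}^{(s)}\}+\{\boldsymbol{\beta}^{(s)}\}$. *)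

theory Defs
  imports "HOL-Number_Theory.Number_Theory"
begin

definition kappa :: "nat \<Rightarrow> nat \<Rightarrow> nat" where
  "kappa K T = (LEAST k. coprime (K + 1 + k) (T - 1))"

definition Kstar :: "nat \<Rightarrow> nat \<Rightarrow> nat" where
  "Kstar K T = K + 1 + kappa K T"

definition Tbar :: "nat \<Rightarrow> nat" where
  "Tbar T = T - 1"

(* q = K* L* + Tbar^2 ; note L* = Kstar L T *)
definition qCAT :: "nat \<Rightarrow> nat \<Rightarrow> nat \<Rightarrow> nat" where
  "qCAT K L T = Kstar K T * Kstar L T + (Tbar T)^2"

definition yCAT :: "nat \<Rightarrow> nat \<Rightarrow> nat \<Rightarrow> nat \<Rightarrow> nat" where
  "yCAT x K L T = (THE y. y < qCAT K L T \<and>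
      [x * Tbar T + y * Kstar K T = 0] (mod qCAT K L T))"

(* entry sets of the four vectors, as residues in {0..q-1} (integers) *)
definition alpha_p :: "nat \<Rightarrow> nat \<Rightarrow> nat \<Rightarrow> nat \<Rightarrow> int set" where
  "alpha_p x K L T = (\<lambda>k. (int k * int (yCAT x K L T)) mod int (qCAT K L T)) ` {0..<K}"

definition alpha_s :: "nat \<Rightarrow> nat \<Rightarrow> nat \<Rightarrow> nat \<Rightarrow> int set" where
  "alpha_s x K L T = (\<lambda>k. (int K * int (yCAT x K L T) + int k * int x) mod int (qCAT K L T)) ` {0..<T}"

definition beta_p :: "nat \<Rightarrow> nat \<Rightarrow> nat \<Rightarrow> nat \<Rightarrow> int set" where
  "beta_p x K L T = (\<lambda>k. (int k * int x) mod int (qCAT K L T)) ` {0..<L}"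

definition beta_s :: "nat \<Rightarrow> nat \<Rightarrow> nat \<Rightarrow> nat \<Rightarrow> int set" where
  "beta_s x K L T = (\<lambda>k. (int k * int (yCAT x K L T) - int x) mod int (qCAT K L T)) ` {0..<T}"

definition sumset_mod :: "int \<Rightarrow> int set \<Rightarrow> int set \<Rightarrow> int set" where
  "sumset_mod q A B = {(a + b) mod q | a b. a \<in> A \<and> b \<in> B}"

definition TR :: "nat \<Rightarrow> nat \<Rightarrow> nat \<Rightarrow> nat \<Rightarrow> int set" where
  "TR x K L T = sumset_mod (int (qCAT K L T)) (alpha_p x K L T) (beta_s x K L T)"

definition BL :: "nat \<Rightarrow> nat \<Rightarrow> nat \<Rightarrow> nat \<Rightarrow> int set" where
  "BL x K L T = sumset_mod (int (qCAT K L T)) (alpha_s x K L T) (beta_p x K L T)"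

definition BR :: "nat \<Rightarrow> nat \<Rightarrow> nat \<Rightarrow> nat \<Rightarrow> int set" where
  "BR x K L T = sumset_mod (int (qCAT K L T)) (alpha_s x K L T) (beta_s x K L T)"

end

theory Submission
  imports Defs
begin


definition Pm :: "int \<Rightarrow> int \<Rightarrow> int \<Rightarrow> int \<Rightarrow> int \<Rightarrow> int" where
  "Pm q x y i m = (i*x + m*y) mod q"

lemma dvd_small_zero:
  fixes q v :: int
  assumes "q dvd v" "\<bar>v\<bar> < q" shows "v = 0"
proof (rule ccontr)
  assume "v \<noteq> 0"
  hence "\<bar>q\<bar> \<le> \<bar>v\<bar>" using dvd_imp_le_int assms(1) by blast
  thus False using assms(2) by linarith
qed

lemma Pm_eq_iff: "Pm q x y i m = Pm q x y i' m' \<longleftrightarrow> q dvd ((i'-i)*x + (m'-m)*y)"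
proof -
  have "(i'-i)*x + (m'-m)*y = -((i*x+m*y) - (i'*x+m'*y))" by (simp add: algebra_simps)
  thus ?thesis unfolding Pm_def mod_eq_dvd_iff by (subst dvd_diff_commute) simp
qed

lemma core_TR:
  fixes q x y Ks Ls Tb K L T ka la :: int
  assumes q: "q = Ks*Ls + Tb^2" and Tb: "Tb = T-1" and T2: "T \<ge> 2" and LT: "L \<ge> T" and KL: "K \<ge> L"
    and Ks: "Ks = K+1+ka" and Ls: "Ls = L+1+la" and ka: "0 \<le> ka" "ka \<le> T-2"
    and la: "0 \<le> la" "la \<le> T-2"
    and cK: "coprime Ks Tb" and cy: "coprime y q"
    and r1: "q dvd (x*Tb + y*Ks)"
  shows "int (card ((\<lambda>m. Pm q x y (-1) m) ` {0..K+T-2} \<inter> (\<lambda>(i,m). Pm q x y i m) ` ({-1..T-2} \<times> {K..K+T-1})))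
         = 2*Tb - ka"
proof -
  have KsL: "Ks*Ls \<ge> Ks*3" using Ls la LT T2 Ks ka KL by (intro mult_left_mono) auto
  have qbig: "q > K+T-2" using q KsL Ks ka KL LT by (smt (verit) zero_le_power2)
  have main: "(\<lambda>m. Pm q x y (-1) m) ` {0..K+T-2} \<inter> (\<lambda>(i,m). Pm q x y i m) ` ({-1..T-2} \<times> {K..K+T-1})
     = (\<lambda>m. Pm q x y (-1) m) ` ({0..T-2-ka} \<union> {K..K+T-2})"
  proof (intro equalityI subsetI)
    fix z assume "z \<in> (\<lambda>m. Pm q x y (-1) m) ` {0..K+T-2} \<inter> (\<lambda>(i,m). Pm q x y i m) ` ({-1..T-2} \<times> {K..K+T-1})"
    then obtain m i m' where m: "0 \<le> m" "m \<le> K+T-2" and i: "-1 \<le> i" "i \<le> T-2" and m': "K \<le> m'" "m' \<le> K+T-1"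
      and z: "z = Pm q x y (-1) m" and e: "Pm q x y (-1) m = Pm q x y i m'" by auto
    define e where "e = i+1"
    define d where "d = m'-m"
    have h: "q dvd (e*x + d*y)" using e Pm_eq_iff[of q x y "-1" m i m'] unfolding e_def d_def by simp
    have "q dvd (Tb*(e*x+d*y))" using h by simp
    moreover have "Tb*(e*x+d*y) = e*(x*Tb+y*Ks) + y*(d*Tb - e*Ks)" by (simp add: algebra_simps)
    ultimately have "q dvd y*(d*Tb - e*Ks)" using r1 by (metis dvd_add_right_iff dvd_mult)
    hence h2: "q dvd (d*Tb - e*Ks)" using cy by (metis coprime_commute coprime_dvd_mult_right_iff)
    have e0: "0 \<le> e" "e \<le> Tb" using i Tb unfolding e_def by auto
    have d0: "-(T-2) \<le> d" "d \<le> K+Tb" using m m' Tb unfolding d_def by auto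
    have Tbpos: "Tb > 0" using Tb T2 by simp
    have u1: "d*Tb \<le> (K+Tb)*Tb" using d0 Tbpos by (intro mult_right_mono) auto
    have u1': "(K+Tb)*Tb = K*Tb + Tb*Tb" by (simp add: algebra_simps)
    have u2: "K*Tb < Ks*Ls" using Ks ka Ls la LT KL Tb T2 Tbpos
      by (intro mult_strict_mono) auto
    have u3: "e*Ks \<ge> 0" using e0 Ks ka KL LT T2 by simp
    have l1: "d*Tb \<ge> (1-Tb)*Tb" using d0 Tbpos Tb by (intro mult_right_mono) auto
    have l1': "(1-Tb)*Tb = Tb - Tb*Tb" by (simp add: algebra_simps)
    have l2: "e*Ks \<le> Tb*Ks" using e0 Ks ka KL LT T2 by (intro mult_right_mono) auto
    have l3: "Tb*Ks < Ls*Ks" using Ks ka Ls la LT KL Tb T2 by (intro mult_strict_right_mono) auto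
    have l3': "Ls*Ks = Ks*Ls" by simp
    have qq: "q = Ks*Ls + Tb*Tb" using q by (simp add: power2_eq_square)
    have b1: "d*Tb - e*Ks < q" using u1 u1' u2 u3 qq by linarith
    have b2: "-(d*Tb - e*Ks) < q" using l1 l1' l2 l3 l3' qq Tbpos by linarith
    have "\<bar>d*Tb - e*Ks\<bar> < q" using b1 b2 by (simp only: abs_less_iff)
    hence V0: "d*Tb = e*Ks" using dvd_small_zero[OF h2] by simp
    hence "Tb dvd e*Ks" by (metis dvd_triv_right)
    hence "Tb dvd e" using cK by (metis coprime_commute coprime_dvd_mult_left_iff)
    then obtain c where c: "e = Tb*c" by auto
    have c0: "0 \<le> c" using e0 c Tbpos by (simp add: zero_le_mult_iff)
    have c2: "c < 2"
    proof (rule ccontr)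
      assume "\<not> c < 2" hence "Tb*2 \<le> Tb*c" using Tbpos by (intro mult_left_mono) auto
      thus False using e0 c Tbpos by linarith
    qed
    have "c = 0 \<or> c = 1" using c0 c2 by linarith
    then show "z \<in> (\<lambda>m. Pm q x y (-1) m) ` ({0..T-2-ka} \<union> {K..K+T-2})"
    proof
      assume "c = 0" hence "e = 0" "d = 0" using c V0 Tbpos by auto
      hence "m \<in> {0..T-2-ka} \<union> {K..K+T-2}" using m m' unfolding d_def by simp
      thus ?thesis unfolding z by (rule imageI)
    next
      assume "c = 1" hence "e = Tb" "d = Ks" using c V0 Tbpos by auto
      hence "m \<in> {0..T-2-ka} \<union> {K..K+T-2}" using m m' Ks unfolding d_def by simp
      thus ?thesis unfolding z by (rule imageI)
    qed
  next
    fix z assume "z \<in> (\<lambda>m. Pm q x y (-1) m) ` ({0..T-2-ka} \<union> {K..K+T-2})"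
    then obtain m where z: "z = Pm q x y (-1) m" and m: "m \<in> {0..T-2-ka} \<union> {K..K+T-2}" by auto
    have mr: "m \<in> {0..K+T-2}" using m ka KL LT by auto
    show "z \<in> (\<lambda>m. Pm q x y (-1) m) ` {0..K+T-2} \<inter> (\<lambda>(i,m). Pm q x y i m) ` ({-1..T-2} \<times> {K..K+T-1})"
    proof (cases "m \<ge> K")
      case True
      hence "(-1, m) \<in> {-1..T-2} \<times> {K..K+T-1}" using mr T2 by auto
      hence "z \<in> (\<lambda>(i,m). Pm q x y i m) ` ({-1..T-2} \<times> {K..K+T-1})"
        unfolding z by (rule rev_image_eqI) simp
      moreover have "z \<in> (\<lambda>m. Pm q x y (-1) m) ` {0..K+T-2}" unfolding z using mr by (rule imageI)
      ultimately show ?thesis by blast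
    next
      case False
      hence mm: "m \<in> {0..T-2-ka}" using m by auto
      have in2: "(Tb-1, m+Ks) \<in> {-1..T-2} \<times> {K..K+T-1}" using mm Tb Ks ka T2 by auto
      have "Pm q x y (-1) m = Pm q x y (Tb-1) (m+Ks)"
        unfolding Pm_eq_iff using r1 by (simp add: algebra_simps)
      hence "z = (\<lambda>(i,m). Pm q x y i m) (Tb-1, m+Ks)" using z by simp
      hence "z \<in> (\<lambda>(i,m). Pm q x y i m) ` ({-1..T-2} \<times> {K..K+T-1})" using in2 by blast
      moreover have "z \<in> (\<lambda>m. Pm q x y (-1) m) ` {0..K+T-2}" unfolding z using mr by (rule imageI)
      ultimately show ?thesis by blast
    qed
  qed
  have inj: "inj_on (\<lambda>m. Pm q x y (-1) m) ({0..T-2-ka} \<union> {K..K+T-2})"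
  proof (rule inj_onI)
    fix a b assume a: "a \<in> {0..T-2-ka} \<union> {K..K+T-2}" and b: "b \<in> {0..T-2-ka} \<union> {K..K+T-2}"
      and ab: "Pm q x y (-1) a = Pm q x y (-1) b"
    have "q dvd (b-a)*y" using ab Pm_eq_iff[of q x y "-1" a "-1" b] by simp
    hence "q dvd (b-a)" using cy by (metis coprime_commute coprime_dvd_mult_left_iff)
    moreover have "\<bar>b-a\<bar> < q" using a b qbig ka KL LT unfolding Un_iff atLeastAtMost_iff abs_less_iff by linarith
    ultimately show "a = b" using dvd_small_zero by fastforce
  qed
  have disj: "{0..T-2-ka} \<inter> {K..K+T-2} = {}" using ka KL LT by auto
  have "card ({0..T-2-ka} \<union> {K..K+T-2}) = card {0..T-2-ka} + card {K..K+T-2}"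
    by (rule card_Un_disjoint) (use disj in auto)
  also have "\<dots> = nat (T-1-ka) + nat (T-1)" by simp
  finally have "int (card ({0..T-2-ka} \<union> {K..K+T-2})) = 2*Tb - ka" using ka Tb T2 by simp
  moreover have "card ((\<lambda>m. Pm q x y (-1) m) ` ({0..T-2-ka} \<union> {K..K+T-2})) = card ({0..T-2-ka} \<union> {K..K+T-2})"
    by (rule card_image[OF inj])
  ultimately show ?thesis unfolding main by (simp only:)
qed

lemma core_BL:
  fixes q x y Ks Ls Tb K L T ka la :: int
  assumes q: "q = Ks*Ls + Tb^2" and Tb: "Tb = T-1" and T2: "T \<ge> 2" and LT: "L \<ge> T" and KL: "K \<ge> L"
    and Ks: "Ks = K+1+ka" and Ls: "Ls = L+1+la" and ka: "0 \<le> ka" "ka \<le> T-2"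
    and la: "0 \<le> la" "la \<le> T-2"
    and cL: "coprime Ls Tb" and cx: "coprime x q"
    and r2: "q dvd (Tb*y - Ls*x)"
  shows "int (card ((\<lambda>n. Pm q x y n K) ` {0..T+L-2} \<inter> (\<lambda>(i,m). Pm q x y i m) ` ({-1..T-2} \<times> {K..K+T-1})))
         = 2*Tb - la"
proof -
  have KsL: "Ks*Ls \<ge> Ks*3" using Ls la LT T2 Ks ka KL by (intro mult_left_mono) auto
  have qbig: "q > T+L-2" using q KsL Ks ka KL LT by (smt (verit) zero_le_power2)
  have main: "(\<lambda>n. Pm q x y n K) ` {0..T+L-2} \<inter> (\<lambda>(i,m). Pm q x y i m) ` ({-1..T-2} \<times> {K..K+T-1})
     = (\<lambda>n. Pm q x y n K) ` ({0..T-2} \<union> {Ls-1..T+L-2})"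
  proof (intro equalityI subsetI)
    fix z assume "z \<in> (\<lambda>n. Pm q x y n K) ` {0..T+L-2} \<inter> (\<lambda>(i,m). Pm q x y i m) ` ({-1..T-2} \<times> {K..K+T-1})"
    then obtain n i m' where n: "0 \<le> n" "n \<le> T+L-2" and i: "-1 \<le> i" "i \<le> T-2" and m': "K \<le> m'" "m' \<le> K+T-1"
      and z: "z = Pm q x y n K" and e: "Pm q x y n K = Pm q x y i m'" by auto
    define e where "e = i-n"
    define d where "d = m'-K"
    have h: "q dvd (e*x + d*y)" using e Pm_eq_iff[of q x y n K i m'] unfolding e_def d_def by simp
    have "q dvd (Tb*(e*x+d*y))" using h by simp
    moreover have "Tb*(e*x+d*y) = d*(Tb*y - Ls*x) + x*(e*Tb + d*Ls)" by (simp add: algebra_simps)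
    ultimately have "q dvd x*(e*Tb + d*Ls)" using r2 by (metis dvd_add_right_iff dvd_mult)
    hence h2: "q dvd (e*Tb + d*Ls)" using cx by (metis coprime_commute coprime_dvd_mult_right_iff)
    have e0: "-(L+Tb) \<le> e" "e \<le> Tb - 1" using i n Tb unfolding e_def by auto
    have d0: "0 \<le> d" "d \<le> Tb" using m' Tb unfolding d_def by auto
    have Tbpos: "Tb > 0" using Tb T2 by simp
    have u1: "e*Tb \<le> (Tb-1)*Tb" using e0 Tbpos by (intro mult_right_mono) auto
    have u1': "(Tb-1)*Tb = Tb*Tb - Tb" by (simp add: algebra_simps)
    have u2: "d*Ls \<le> Tb*Ls" using d0 Ls la LT T2 by (intro mult_right_mono) auto
    have u3: "Tb*Ls < Ks*Ls" using Ks ka Ls la LT KL Tb T2 by (intro mult_strict_right_mono) auto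
    have l1: "e*Tb \<ge> (-(L+Tb))*Tb" using e0 Tbpos by (intro mult_right_mono) auto
    have l1': "(-(L+Tb))*Tb = - (L*Tb) - Tb*Tb" by (simp add: algebra_simps)
    have l2: "d*Ls \<ge> 0" using d0 Ls la LT T2 by simp
    have l3: "L*Tb < Ls*Ks" using Ks ka Ls la LT KL Tb T2 Tbpos by (intro mult_strict_mono) auto
    have l3': "Ls*Ks = Ks*Ls" by simp
    have qq: "q = Ks*Ls + Tb*Tb" using q by (simp add: power2_eq_square)
    have b1: "e*Tb + d*Ls < q" using u1 u1' u2 u3 qq Tbpos by linarith
    have b2: "-(e*Tb + d*Ls) < q" using l1 l1' l2 l3 l3' qq Tbpos by linarith
    have "\<bar>e*Tb + d*Ls\<bar> < q" using b1 b2 by (simp only: abs_less_iff)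
    hence V0: "e*Tb = -(d*Ls)" using dvd_small_zero[OF h2] by simp
    hence "Tb dvd d*Ls" by (metis dvd_minus_iff dvd_triv_right)
    hence "Tb dvd d" using cL by (metis coprime_commute coprime_dvd_mult_left_iff)
    then obtain c where c: "d = Tb*c" by auto
    have c0: "0 \<le> c" using d0 c Tbpos by (simp add: zero_le_mult_iff)
    have c2: "c < 2"
    proof (rule ccontr)
      assume "\<not> c < 2" hence "Tb*2 \<le> Tb*c" using Tbpos by (intro mult_left_mono) auto
      thus False using d0 c Tbpos by linarith
    qed
    have "c = 0 \<or> c = 1" using c0 c2 by linarith
    then show "z \<in> (\<lambda>n. Pm q x y n K) ` ({0..T-2} \<union> {Ls-1..T+L-2})"
    proof
      assume "c = 0" hence "d = 0" "e = 0" using c V0 Tbpos by auto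
      hence "n \<in> {0..T-2} \<union> {Ls-1..T+L-2}" using n i unfolding e_def by simp
      thus ?thesis unfolding z by (rule imageI)
    next
      assume "c = 1" hence "d = Tb" "e*Tb = -(Tb*Ls)" using c V0 Tbpos by auto
      hence "e = -Ls" using Tbpos by (metis mult.commute mult_cancel_left mult_minus_right less_irrefl)
      hence "n \<in> {0..T-2} \<union> {Ls-1..T+L-2}" using n i unfolding e_def by simp
      thus ?thesis unfolding z by (rule imageI)
    qed
  next
    fix z assume "z \<in> (\<lambda>n. Pm q x y n K) ` ({0..T-2} \<union> {Ls-1..T+L-2})"
    then obtain n where z: "z = Pm q x y n K" and n: "n \<in> {0..T-2} \<union> {Ls-1..T+L-2}" by auto
    have nr: "n \<in> {0..T+L-2}" using n la LT Ls by auto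
    have zL: "z \<in> (\<lambda>n. Pm q x y n K) ` {0..T+L-2}" unfolding z using nr by (rule imageI)
    show "z \<in> (\<lambda>n. Pm q x y n K) ` {0..T+L-2} \<inter> (\<lambda>(i,m). Pm q x y i m) ` ({-1..T-2} \<times> {K..K+T-1})"
    proof (cases "n \<le> T-2")
      case True
      hence "(n, K) \<in> {-1..T-2} \<times> {K..K+T-1}" using nr T2 by auto
      hence "z \<in> (\<lambda>(i,m). Pm q x y i m) ` ({-1..T-2} \<times> {K..K+T-1})"
        unfolding z by (rule rev_image_eqI) simp
      thus ?thesis using zL by blast
    next
      case False
      hence nn: "n \<in> {Ls-1..T+L-2}" using n by auto
      have in2: "(n-Ls, K+Tb) \<in> {-1..T-2} \<times> {K..K+T-1}" using nn Tb Ls la T2 by auto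
      have "Pm q x y n K = Pm q x y (n-Ls) (K+Tb)"
        unfolding Pm_eq_iff using r2 by (simp add: algebra_simps)
      hence "z = (\<lambda>(i,m). Pm q x y i m) (n-Ls, K+Tb)" using z by simp
      hence "z \<in> (\<lambda>(i,m). Pm q x y i m) ` ({-1..T-2} \<times> {K..K+T-1})" using in2 by blast
      thus ?thesis using zL by blast
    qed
  qed
  have inj: "inj_on (\<lambda>n. Pm q x y n K) ({0..T-2} \<union> {Ls-1..T+L-2})"
  proof (rule inj_onI)
    fix a b assume a: "a \<in> {0..T-2} \<union> {Ls-1..T+L-2}" and b: "b \<in> {0..T-2} \<union> {Ls-1..T+L-2}"
      and ab: "Pm q x y a K = Pm q x y b K"
    have "q dvd (b-a)*x" using ab Pm_eq_iff[of q x y a K b K] by simp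
    hence "q dvd (b-a)" using cx by (metis coprime_commute coprime_dvd_mult_left_iff)
    moreover have "\<bar>b-a\<bar> < q" using a b qbig la Ls LT unfolding Un_iff atLeastAtMost_iff abs_less_iff by linarith
    ultimately show "a = b" using dvd_small_zero by fastforce
  qed
  have disj: "{0..T-2} \<inter> {Ls-1..T+L-2} = {}" using la Ls LT by auto
  have "card ({0..T-2} \<union> {Ls-1..T+L-2}) = card {0..T-2} + card {Ls-1..T+L-2}"
    by (rule card_Un_disjoint) (use disj in auto)
  also have "\<dots> = nat (T-1) + nat (T+L-Ls)" by simp
  finally have "int (card ({0..T-2} \<union> {Ls-1..T+L-2})) = 2*Tb - la" using la Ls Tb T2 by simp
  moreover have "card ((\<lambda>n. Pm q x y n K) ` ({0..T-2} \<union> {Ls-1..T+L-2})) = card ({0..T-2} \<union> {Ls-1..T+L-2})"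
    by (rule card_image[OF inj])
  ultimately show ?thesis unfolding main by (simp only:)
qed



lemma kappa_facts:
  assumes "T \<ge> 2"
  shows "kappa K T \<le> T - 2 \<and> coprime (Kstar K T) (T - 1)"
proof -
  define Tb where "Tb = T - 1"
  define k0 where "k0 = (Tb - K mod Tb) mod Tb"
  have Tbpos: "Tb > 0" using assms Tb_def by simp
  have "k0 < Tb" unfolding k0_def using Tbpos by simp
  hence k0le: "k0 \<le> T - 2" using Tb_def assms by linarith
  have "(K + k0) mod Tb = 0"
  proof (cases "K mod Tb = 0")
    case True thus ?thesis unfolding k0_def by (simp add: mod_add_left_eq[symmetric])
  next
    case False
    hence "k0 = Tb - K mod Tb" unfolding k0_def using Tbpos by simp
    have "K mod Tb < Tb" using Tbpos by simp
    hence "K mod Tb + k0 = Tb" using \<open>k0 = Tb - K mod Tb\<close> by simp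
    hence "(K mod Tb + k0) mod Tb = 0" by simp
    thus ?thesis by (simp add: mod_add_left_eq)
  qed
  then obtain c where c: "K + k0 = Tb * c" by (metis mod_0_imp_dvd dvd_def)
  have "coprime (K + 1 + k0) Tb"
  proof -
    have g: "gcd Tb (c * Tb + 1) = gcd Tb 1" by (rule gcd_add_mult)
    have eq: "K + 1 + k0 = c * Tb + 1" using c by simp
    have "gcd Tb (K + 1 + k0) = 1" unfolding eq g by (rule gcd_1_nat)
    hence "coprime Tb (K + 1 + k0)" by (simp only: coprime_iff_gcd_eq_1)
    thus ?thesis by (rule coprime_commute[THEN iffD1])
  qed
  hence ex: "coprime (K + 1 + k0) (T - 1)" unfolding Tb_def .
  have "kappa K T \<le> k0" unfolding kappa_def by (rule Least_le) (rule ex)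
  moreover have "coprime (K + 1 + kappa K T) (T - 1)" unfolding kappa_def by (rule LeastI) (rule ex)
  ultimately show ?thesis using k0le unfolding Kstar_def by simp
qed

lemma params:
  fixes K L T x :: nat
  assumes T2: "T \<ge> 2" and LT: "L \<ge> T" and KL: "K \<ge> L" and cxq: "coprime x (qCAT K L T)"
  defines "q \<equiv> int (qCAT K L T)" and "X \<equiv> int x" and "Y \<equiv> int (yCAT x K L T)"
    and "Ks \<equiv> int (Kstar K T)" and "Ls \<equiv> int (Kstar L T)" and "Tb \<equiv> int (Tbar T)"
  shows "q = Ks*Ls + Tb^2 \<and> q dvd (X*Tb + Y*Ks) \<and> coprime Y q \<and> q dvd (Tb*Y - Ls*X) \<and> coprime X q
    \<and> coprime Ks Tb \<and> coprime Ls Tb"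
proof -
  have qeq: "q = Ks*Ls + Tb^2" unfolding q_def Ks_def Ls_def Tb_def qCAT_def by simp
  have cKT: "coprime Ks Tb" using kappa_facts[OF T2, of K] unfolding Ks_def Tb_def Tbar_def
    by (simp only: coprime_int_iff)
  have cLT: "coprime Ls Tb" using kappa_facts[OF T2, of L] unfolding Ls_def Tb_def Tbar_def
    by (simp only: coprime_int_iff)
  have cX: "coprime X q" using cxq unfolding X_def q_def by (simp only: coprime_int_iff)
  have cKq: "coprime Ks q"
  proof -
    have "gcd Ks (Ls * Ks + Tb^2) = gcd Ks (Tb^2)" by (rule gcd_add_mult)
    moreover have "coprime Ks (Tb^2)" using cKT by simp
    ultimately have "gcd Ks q = 1" using qeq by (simp add: mult.commute coprime_iff_gcd_eq_1)
    thus ?thesis by (simp only: coprime_iff_gcd_eq_1)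
  qed
  have cTq: "coprime Tb q"
  proof -
    have "gcd Tb (Tb * Tb + Ks*Ls) = gcd Tb (Ks*Ls)" by (rule gcd_add_mult)
    moreover have "coprime Tb (Ks*Ls)" using cKT cLT by (simp add: coprime_commute)
    ultimately have "gcd Tb q = 1" using qeq by (simp add: power2_eq_square add.commute coprime_iff_gcd_eq_1)
    thus ?thesis by (simp only: coprime_iff_gcd_eq_1)
  qed
  have kp: "Ks*Ls > 0" unfolding Ks_def Ls_def Kstar_def by simp
  have "Tb^2 \<ge> 0" by simp
  hence qpos: "q > 0" using qeq kp by linarith
  have Pint: "(y < qCAT K L T \<and> [x * Tbar T + y * Kstar K T = 0] (mod qCAT K L T)) \<longleftrightarrow>
      (int y < q \<and> q dvd (X*Tb + int y*Ks))" for y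
  proof -
    have eq: "X*Tb + int y*Ks = int (x * Tbar T + y * Kstar K T)" unfolding X_def Tb_def Ks_def by simp
    show ?thesis unfolding eq q_def cong_0_iff int_dvd_int_iff of_nat_less_iff ..
  qed
  obtain v where v: "[Ks * v = 1] (mod q)" using cong_solve_coprime_int[OF cKq] by blast
  define yi where "yi = (-(X*Tb)*v) mod q"
  have yi0: "0 \<le> yi" "yi < q" unfolding yi_def using qpos by auto
  have c1: "[yi = -(X*Tb)*v] (mod q)" unfolding yi_def cong_def by simp
  have c2: "[yi*Ks = -(X*Tb)*v*Ks] (mod q)" using c1 by (rule cong_scalar_right)
  have c3: "[-(X*Tb)*(Ks*v) = -(X*Tb)*1] (mod q)" using v by (rule cong_scalar_left)
  have e3: "-(X*Tb)*v*Ks = -(X*Tb)*(Ks*v)" by (simp only: mult.assoc mult.commute)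
  have c4: "[yi*Ks = -(X*Tb)] (mod q)" using cong_trans[OF c2[unfolded e3] c3] by simp
  have "[X*Tb + yi*Ks = X*Tb + -(X*Tb)] (mod q)" using c4 by (rule cong_add_lcancel[THEN iffD2])
  hence "q dvd (X*Tb + yi*Ks)" by (simp add: cong_0_iff)
  hence ex: "nat yi < qCAT K L T \<and> [x * Tbar T + nat yi * Kstar K T = 0] (mod qCAT K L T)"
    unfolding Pint using yi0 by simp
  have uniq: "y1 = y2" if h1: "y1 < qCAT K L T \<and> [x * Tbar T + y1 * Kstar K T = 0] (mod qCAT K L T)"
     and h2: "y2 < qCAT K L T \<and> [x * Tbar T + y2 * Kstar K T = 0] (mod qCAT K L T)" for y1 y2
  proof -
    have a1: "q dvd (X*Tb + int y1*Ks)" "int y1 < q" using h1 unfolding Pint by auto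
    have a2: "q dvd (X*Tb + int y2*Ks)" "int y2 < q" using h2 unfolding Pint by auto
    have "q dvd (X*Tb + int y1*Ks) - (X*Tb + int y2*Ks)" using a1(1) a2(1) by (rule dvd_diff)
    moreover have "(X*Tb + int y1*Ks) - (X*Tb + int y2*Ks) = (int y1 - int y2)*Ks" by (simp add: algebra_simps)
    ultimately have "q dvd (int y1 - int y2)*Ks" by simp
    hence "q dvd (int y1 - int y2)" using cKq by (metis coprime_commute coprime_dvd_mult_left_iff)
    moreover have "\<bar>int y1 - int y2\<bar> < q" using a1 a2 by linarith
    ultimately have "int y1 - int y2 = 0" by (rule dvd_small_zero)
    thus ?thesis by simp
  qed
  have "yCAT x K L T < qCAT K L T \<and> [x * Tbar T + yCAT x K L T * Kstar K T = 0] (mod qCAT K L T)"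
    unfolding yCAT_def by (rule theI[of _ "nat yi"]) (rule ex, rule uniq, assumption, rule ex)
  hence r1: "q dvd (X*Tb + Y*Ks)" unfolding Pint Y_def by simp
  have cY: "coprime Y q"
  proof (rule coprimeI)
    fix c assume cy: "c dvd Y" and cq: "c dvd q"
    have "c dvd X*Tb + Y*Ks" using cq r1 by (rule dvd_trans)
    hence "c dvd X*Tb" using cy by (metis dvd_add_left_iff dvd_mult2)
    moreover have "coprime (X*Tb) q" using cX cTq by simp
    ultimately show "is_unit c" using cq by (meson coprime_common_divisor)
  qed
  have "Ks*(Tb*Y - Ls*X) = Tb*(X*Tb + Y*Ks) - X*q" unfolding qeq by (simp add: algebra_simps power2_eq_square)
  moreover have "q dvd Tb*(X*Tb + Y*Ks) - X*q" using r1 by simp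
  ultimately have "q dvd Ks*(Tb*Y - Ls*X)" by simp
  hence r2: "q dvd (Tb*Y - Ls*X)" using cKq by (metis coprime_commute coprime_dvd_mult_right_iff)
  show ?thesis using qeq r1 cY r2 cX cKT cLT by blast
qed


lemma decomp:
  fixes m :: int and A B :: nat
  assumes "1 \<le> A" "1 \<le> B" "0 \<le> m" "m \<le> int A + int B - 2"
  shows "\<exists>j k. j < A \<and> k < B \<and> m = int j + int k"
proof -
  define j where "j = nat (min m (int A - 1))"
  define k where "k = nat (m - min m (int A - 1))"
  have hj: "int j = min m (int A - 1)" unfolding j_def using assms by simp
  have hk: "int k = m - min m (int A - 1)" unfolding k_def by simp
  have "int j < int A" using hj by (cases "m < int A") (auto simp: min_def)
  moreover have "int k < int B" using hk assms by (cases "m < int A") (auto simp: min_def)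
  moreover have "m = int j + int k" using hj hk by simp
  ultimately have "j < A" "k < B" "m = int j + int k" by simp_all
  thus ?thesis by blast
qed

lemma TR_set:
  fixes A B :: nat and q X Y :: int
  assumes "1 \<le> A" "1 \<le> B"
  shows "{(a + b) mod q | a b. a \<in> (\<lambda>k. (int k * Y) mod q) ` {0..<A} \<and> b \<in> (\<lambda>k. (int k * Y - X) mod q) ` {0..<B}}
     = (\<lambda>m. Pm q X Y (-1) m) ` {0..int A + int B - 2}"
proof (intro equalityI subsetI)
  fix z assume "z \<in> {(a + b) mod q | a b. a \<in> (\<lambda>k. (int k * Y) mod q) ` {0..<A} \<and> b \<in> (\<lambda>k. (int k * Y - X) mod q) ` {0..<B}}"
  then obtain j k where jk: "j < A" "k < B" and z: "z = ((int j * Y) mod q + (int k * Y - X) mod q) mod q" by auto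
  have "z = Pm q X Y (-1) (int j + int k)" unfolding z Pm_def mod_add_eq by (simp add: algebra_simps)
  moreover have "int j + int k \<in> {0..int A + int B - 2}" using jk by auto
  ultimately show "z \<in> (\<lambda>m. Pm q X Y (-1) m) ` {0..int A + int B - 2}" by blast
next
  fix z assume "z \<in> (\<lambda>m. Pm q X Y (-1) m) ` {0..int A + int B - 2}"
  then obtain m where z: "z = Pm q X Y (-1) m" and m: "0 \<le> m" "m \<le> int A + int B - 2" by auto
  obtain j k where jk: "j < A" "k < B" "m = int j + int k" using decomp[OF assms m] by blast
  have zz: "z = ((int j * Y) mod q + (int k * Y - X) mod q) mod q" unfolding z Pm_def mod_add_eq jk(3)
    by (simp add: algebra_simps)
  have aa: "(int j * Y) mod q \<in> (\<lambda>k. (int k * Y) mod q) ` {0..<A}" using jk by simp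
  have bb: "(int k * Y - X) mod q \<in> (\<lambda>k. (int k * Y - X) mod q) ` {0..<B}" using jk by simp
  from zz aa bb show "z \<in> {(a + b) mod q | a b. a \<in> (\<lambda>k. (int k * Y) mod q) ` {0..<A} \<and> b \<in> (\<lambda>k. (int k * Y - X) mod q) ` {0..<B}}"
    by blast
qed

lemma BL_set:
  fixes A B K :: nat and q X Y :: int
  assumes "1 \<le> A" "1 \<le> B"
  shows "{(a + b) mod q | a b. a \<in> (\<lambda>k. (int K * Y + int k * X) mod q) ` {0..<A} \<and> b \<in> (\<lambda>k. (int k * X) mod q) ` {0..<B}}
     = (\<lambda>n. Pm q X Y n (int K)) ` {0..int A + int B - 2}"
proof (intro equalityI subsetI)
  fix z assume "z \<in> {(a + b) mod q | a b. a \<in> (\<lambda>k. (int K * Y + int k * X) mod q) ` {0..<A} \<and> b \<in> (\<lambda>k. (int k * X) mod q) ` {0..<B}}"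
  then obtain j k where jk: "j < A" "k < B" and z: "z = ((int K * Y + int j * X) mod q + (int k * X) mod q) mod q" by auto
  have "z = Pm q X Y (int j + int k) (int K)" unfolding z Pm_def mod_add_eq by (simp add: algebra_simps)
  moreover have "int j + int k \<in> {0..int A + int B - 2}" using jk by auto
  ultimately show "z \<in> (\<lambda>n. Pm q X Y n (int K)) ` {0..int A + int B - 2}" by blast
next
  fix z assume "z \<in> (\<lambda>n. Pm q X Y n (int K)) ` {0..int A + int B - 2}"
  then obtain m where z: "z = Pm q X Y m (int K)" and m: "0 \<le> m" "m \<le> int A + int B - 2" by auto
  obtain j k where jk: "j < A" "k < B" "m = int j + int k" using decomp[OF assms m] by blast
  have zz: "z = ((int K * Y + int j * X) mod q + (int k * X) mod q) mod q" unfolding z Pm_def mod_add_eq jk(3)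
    by (simp add: algebra_simps)
  have aa: "(int K * Y + int j * X) mod q \<in> (\<lambda>k. (int K * Y + int k * X) mod q) ` {0..<A}" using jk by simp
  have bb: "(int k * X) mod q \<in> (\<lambda>k. (int k * X) mod q) ` {0..<B}" using jk by simp
  from zz aa bb show "z \<in> {(a + b) mod q | a b. a \<in> (\<lambda>k. (int K * Y + int k * X) mod q) ` {0..<A} \<and> b \<in> (\<lambda>k. (int k * X) mod q) ` {0..<B}}"
    by blast
qed

lemma BR_set:
  fixes T K :: nat and q X Y :: int
  assumes "1 \<le> T"
  shows "{(a + b) mod q | a b. a \<in> (\<lambda>k. (int K * Y + int k * X) mod q) ` {0..<T} \<and> b \<in> (\<lambda>k. (int k * Y - X) mod q) ` {0..<T}}
     = (\<lambda>(i,m). Pm q X Y i m) ` ({-1..int T - 2} \<times> {int K..int K + int T - 1})"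
proof (intro equalityI subsetI)
  fix z assume "z \<in> {(a + b) mod q | a b. a \<in> (\<lambda>k. (int K * Y + int k * X) mod q) ` {0..<T} \<and> b \<in> (\<lambda>k. (int k * Y - X) mod q) ` {0..<T}}"
  then obtain k j where jk: "k < T" "j < T" and z: "z = ((int K * Y + int k * X) mod q + (int j * Y - X) mod q) mod q" by auto
  have "z = (\<lambda>(i,m). Pm q X Y i m) (int k - 1, int K + int j)" unfolding z Pm_def mod_add_eq by (simp add: algebra_simps)
  moreover have "(int k - 1, int K + int j) \<in> {-1..int T - 2} \<times> {int K..int K + int T - 1}" using jk by auto
  ultimately show "z \<in> (\<lambda>(i,m). Pm q X Y i m) ` ({-1..int T - 2} \<times> {int K..int K + int T - 1})" by blast
next
  fix z assume "z \<in> (\<lambda>(i,m). Pm q X Y i m) ` ({-1..int T - 2} \<times> {int K..int K + int T - 1})"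
  then obtain i m where z: "z = Pm q X Y i m" and im: "-1 \<le> i" "i \<le> int T - 2" "int K \<le> m" "m \<le> int K + int T - 1" by auto
  define k where "k = nat (i + 1)"
  define j where "j = nat (m - int K)"
  have jk: "k < T" "j < T" "int k = i + 1" "int j = m - int K" unfolding k_def j_def using im by auto
  have zz: "z = ((int K * Y + int k * X) mod q + (int j * Y - X) mod q) mod q" unfolding z Pm_def mod_add_eq jk(3,4)
    by (simp add: algebra_simps)
  have aa: "(int K * Y + int k * X) mod q \<in> (\<lambda>k. (int K * Y + int k * X) mod q) ` {0..<T}" using jk(1) by simp
  have bb: "(int j * Y - X) mod q \<in> (\<lambda>k. (int k * Y - X) mod q) ` {0..<T}" using jk(2) by simp
  from zz aa bb show "z \<in> {(a + b) mod q | a b. a \<in> (\<lambda>k. (int K * Y + int k * X) mod q) ` {0..<T} \<and> b \<in> (\<lambda>k. (int k * Y - X) mod q) ` {0..<T}}"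
    by blast
qed

theorem lemma7:
  fixes K L T x :: nat
  assumes "K \<ge> L" and "L \<ge> T" and "T \<ge> 2"
    and "x > 0" and "coprime x (qCAT K L T)"
  shows "int (card (TR x K L T \<inter> BR x K L T)) = 2 * int (Tbar T) - int (kappa K T)
       \<and> int (card (BL x K L T \<inter> BR x K L T)) = 2 * int (Tbar T) - int (kappa L T)"
proof -
  note P = params[OF assms(3) assms(2) assms(1) assms(5)]
  have qeq: "int (qCAT K L T) = int (Kstar K T) * int (Kstar L T) + (int (Tbar T))^2" using P by blast
  have r1: "int (qCAT K L T) dvd int x * int (Tbar T) + int (yCAT x K L T) * int (Kstar K T)" using P by blast
  have cY: "coprime (int (yCAT x K L T)) (int (qCAT K L T))" using P by blast
  have r2: "int (qCAT K L T) dvd int (Tbar T) * int (yCAT x K L T) - int (Kstar L T) * int x" using P by blast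
  have cX: "coprime (int x) (int (qCAT K L T))" using P by blast
  have cKT: "coprime (int (Kstar K T)) (int (Tbar T))" using P by blast
  have cLT: "coprime (int (Kstar L T)) (int (Tbar T))" using P by blast
  have T2': "2 \<le> int T" and LT': "int T \<le> int L" and KL': "int L \<le> int K" using assms by simp_all
  have ka0: "0 \<le> int (kappa K T)" and la0: "0 \<le> int (kappa L T)" by simp_all
  have kK: "kappa K T \<le> T - 2" using kappa_facts[OF assms(3)] by blast
  have kL: "kappa L T \<le> T - 2" using kappa_facts[OF assms(3)] by blast
  have kK': "int (kappa K T) \<le> int T - 2" using kK assms by linarith
  have kL': "int (kappa L T) \<le> int T - 2" using kL assms by linarith
  have Tb: "int (Tbar T) = int T - 1" unfolding Tbar_def using assms by simp
  have Ks: "int (Kstar K T) = int K + 1 + int (kappa K T)" unfolding Kstar_def by simp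
  have Ls: "int (Kstar L T) = int L + 1 + int (kappa L T)" unfolding Kstar_def by simp
  have TR: "TR x K L T = (\<lambda>m. Pm (int (qCAT K L T)) (int x) (int (yCAT x K L T)) (-1) m) ` {0..int K + int T - 2}"
    unfolding TR_def sumset_mod_def alpha_p_def beta_s_def using assms by (intro TR_set) auto
  have BL: "BL x K L T = (\<lambda>n. Pm (int (qCAT K L T)) (int x) (int (yCAT x K L T)) n (int K)) ` {0..int T + int L - 2}"
    unfolding BL_def sumset_mod_def alpha_s_def beta_p_def using assms by (intro BL_set) auto
  have BR: "BR x K L T = (\<lambda>(i,m). Pm (int (qCAT K L T)) (int x) (int (yCAT x K L T)) i m) ` ({-1..int T - 2} \<times> {int K..int K + int T - 1})"
    unfolding BR_def sumset_mod_def alpha_s_def beta_s_def using assms by (intro BR_set) auto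
  have A: "int (card (TR x K L T \<inter> BR x K L T)) = 2 * int (Tbar T) - int (kappa K T)"
    unfolding TR BR
    by (rule core_TR[OF qeq Tb T2' LT' KL' Ks Ls ka0 kK' la0 kL' cKT cY r1])
  have B: "int (card (BL x K L T \<inter> BR x K L T)) = 2 * int (Tbar T) - int (kappa L T)"
    unfolding BL BR
    by (rule core_BL[OF qeq Tb T2' LT' KL' Ks Ls ka0 kK' la0 kL' cLT cX r2])
  show ?thesis using A B by blast
qed

end
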